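(* Let $R=kQ/I$ be a string algebra with no DOZE. Then any two distinct bands of $(Q,I)$ (up to cyclic permutation and inversion) have at most one vertex in common.
   Context: A string algebra is $R=kQ/I$ with $I$ generated by paths, each vertex having at most two incoming and two outgoing arrows, and for each arrow $\alpha:x\to y$ at most one arrow $\beta$ from $y$ with $\alpha\beta\notin I$ and at most one arrow $\gamma$ into $x$ with $\gamma\alpha\notin I$ (paths composed left to right). A walk is a sequence of arrows and inverse arrows, reduced if no subwalk $\alpha\alpha^{-1}$ or $\alpha^{-1}\alpha$. A string is a reduced walk containing no zero-relation; a band is a cyclic string, not a power of another cyclic string, all of whose powers are strings. A double-zero is a reduced walk $\rho_1\nu\rho_2$ with $\rho_1,\rho_2$ zero-relations (paths in $I$) traversed along their arrows and $\nu$ a walk; a DOZE is a double-zero $\rho_1\omega_1\omega_2\omega_3\rho_2$ with $\omega_1,\omega_3$ walks and $\omega_2$ a band. *)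

theory Defs
  imports Main "HOL-Library.Sublist"
begin

text \<open>Combinatorial data of a bound quiver (Q,I): vertex set V, arrow set A,
  source s and target t of arrows, and a set Rel of paths generating the
  monomial ideal I.  Paths are lists of arrows, composed left to right.\<close>

datatype 'e letter = Dir 'e | Inv 'e

fun arr :: "'e letter \<Rightarrow> 'e" where
  "arr (Dir a) = a" | "arr (Inv a) = a"

fun lsrc :: "('e \<Rightarrow> 'v) \<Rightarrow> ('e \<Rightarrow> 'v) \<Rightarrow> 'e letter \<Rightarrow> 'v" where
  "lsrc s t (Dir a) = s a" | "lsrc s t (Inv a) = t a"

fun ltgt :: "('e \<Rightarrow> 'v) \<Rightarrow> ('e \<Rightarrow> 'v) \<Rightarrow> 'e letter \<Rightarrow> 'v" where
  "ltgt s t (Dir a) = t a" | "ltgt s t (Inv a) = s a"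

fun linv :: "'e letter \<Rightarrow> 'e letter" where
  "linv (Dir a) = Inv a" | "linv (Inv a) = Dir a"

definition winv :: "'e letter list \<Rightarrow> 'e letter list" where
  "winv w = rev (map linv w)"

definition is_path :: "'e set \<Rightarrow> ('e \<Rightarrow> 'v) \<Rightarrow> ('e \<Rightarrow> 'v) \<Rightarrow> 'e list \<Rightarrow> bool" where
  "is_path A s t p \<longleftrightarrow> p \<noteq> [] \<and> set p \<subseteq> A \<and>
     (\<forall>i. Suc i < length p \<longrightarrow> t (p ! i) = s (p ! Suc i))"

definition in_I :: "'e list set \<Rightarrow> 'e list \<Rightarrow> bool" where
  "in_I Rel p \<longleftrightarrow> (\<exists>r\<in>Rel. sublist r p)"

definition walk :: "'e set \<Rightarrow> ('e \<Rightarrow> 'v) \<Rightarrow> ('e \<Rightarrow> 'v) \<Rightarrow> 'e letter list \<Rightarrow> bool" where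
  "walk A s t w \<longleftrightarrow> (\<forall>l\<in>set w. arr l \<in> A) \<and>
     (\<forall>i. Suc i < length w \<longrightarrow> ltgt s t (w ! i) = lsrc s t (w ! Suc i))"

definition reduced :: "'e letter list \<Rightarrow> bool" where
  "reduced w \<longleftrightarrow> (\<forall>i. Suc i < length w \<longrightarrow> w ! Suc i \<noteq> linv (w ! i))"

definition is_string ::
  "'e set \<Rightarrow> ('e \<Rightarrow> 'v) \<Rightarrow> ('e \<Rightarrow> 'v) \<Rightarrow> 'e list set \<Rightarrow> 'e letter list \<Rightarrow> bool" where
  "is_string A s t Rel w \<longleftrightarrow> walk A s t w \<and> reduced w \<and>
     \<not> (\<exists>p. is_path A s t p \<and> in_I Rel p \<and>
          (sublist (map Dir p) w \<or> sublist (winv (map Dir p)) w))"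

definition cyclic_walk :: "('e \<Rightarrow> 'v) \<Rightarrow> ('e \<Rightarrow> 'v) \<Rightarrow> 'e letter list \<Rightarrow> bool" where
  "cyclic_walk s t w \<longleftrightarrow> w \<noteq> [] \<and> lsrc s t (hd w) = ltgt s t (last w)"

definition is_band ::
  "'e set \<Rightarrow> ('e \<Rightarrow> 'v) \<Rightarrow> ('e \<Rightarrow> 'v) \<Rightarrow> 'e list set \<Rightarrow> 'e letter list \<Rightarrow> bool" where
  "is_band A s t Rel b \<longleftrightarrow>
     is_string A s t Rel b \<and> cyclic_walk s t b \<and>
     (\<forall>n. is_string A s t Rel (concat (replicate n b))) \<and>
     \<not> (\<exists>c m. m \<ge> 2 \<and> is_string A s t Rel c \<and> cyclic_walk s t c \<and>
              b = concat (replicate m c))"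

definition band_equiv :: "'e letter list \<Rightarrow> 'e letter list \<Rightarrow> bool" where
  "band_equiv b b' \<longleftrightarrow> (\<exists>k. b' = rotate k b \<or> b' = rotate k (winv b))"

definition walk_verts :: "('e \<Rightarrow> 'v) \<Rightarrow> ('e \<Rightarrow> 'v) \<Rightarrow> 'e letter list \<Rightarrow> 'v set" where
  "walk_verts s t w = lsrc s t ` set w \<union> ltgt s t ` set w"

definition string_algebra ::
  "'v set \<Rightarrow> 'e set \<Rightarrow> ('e \<Rightarrow> 'v) \<Rightarrow> ('e \<Rightarrow> 'v) \<Rightarrow> 'e list set \<Rightarrow> bool" where
  "string_algebra V A s t Rel \<longleftrightarrow>
     finite V \<and> finite A \<and> (\<forall>a\<in>A. s a \<in> V \<and> t a \<in> V) \<and>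
     (\<forall>r\<in>Rel. is_path A s t r \<and> length r \<ge> 2) \<and>
     (\<forall>v\<in>V. card {a\<in>A. t a = v} \<le> 2 \<and> card {a\<in>A. s a = v} \<le> 2) \<and>
     (\<forall>a\<in>A. card {b\<in>A. s b = t a \<and> \<not> in_I Rel [a, b]} \<le> 1 \<and>
             card {c\<in>A. t c = s a \<and> \<not> in_I Rel [c, a]} \<le> 1)"

definition has_DOZE ::
  "'e set \<Rightarrow> ('e \<Rightarrow> 'v) \<Rightarrow> ('e \<Rightarrow> 'v) \<Rightarrow> 'e list set \<Rightarrow> bool" where
  "has_DOZE A s t Rel \<longleftrightarrow>
     (\<exists>\<rho>1 \<rho>2 \<omega>1 \<omega>2 \<omega>3.
        is_path A s t \<rho>1 \<and> in_I Rel \<rho>1 \<and> is_path A s t \<rho>2 \<and> in_I Rel \<rho>2 \<and>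
        walk A s t \<omega>1 \<and> walk A s t \<omega>3 \<and> is_band A s t Rel \<omega>2 \<and>
        walk A s t (map Dir \<rho>1 @ \<omega>1 @ \<omega>2 @ \<omega>3 @ map Dir \<rho>2) \<and>
        reduced (map Dir \<rho>1 @ \<omega>1 @ \<omega>2 @ \<omega>3 @ map Dir \<rho>2))"

end

theory Submission imports Defs begin

lemma linv_linv[simp]: "linv (linv l) = l" by (cases l) auto
lemma arr_linv[simp]: "arr (linv l) = arr l" by (cases l) auto
lemma ltgt_linv[simp]: "ltgt s t (linv l) = lsrc s t l" by (cases l) auto
lemma lsrc_linv[simp]: "lsrc s t (linv l) = ltgt s t l" by (cases l) auto
lemma linv_eq_iff[simp]: "linv a = linv b \<longleftrightarrow> a = b" by (metis linv_linv)

lemma winv_append[simp]: "winv (xs @ ys) = winv ys @ winv xs" by (simp add: winv_def)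
lemma winv_winv[simp]: "winv (winv w) = w" by (simp add: winv_def rev_map comp_def)
lemma set_winv[simp]: "set (winv w) = linv ` set w" by (simp add: winv_def)
lemma length_winv[simp]: "length (winv w) = length w" by (simp add: winv_def)
lemma winv_Nil[simp]: "winv [] = []" by (simp add: winv_def)
lemma winv_Cons[simp]: "winv (x # xs) = winv xs @ [linv x]" by (simp add: winv_def)

lemma walk_iff: "walk A s t w \<longleftrightarrow> (\<forall>l\<in>set w. arr l \<in> A) \<and> successively (\<lambda>p q. ltgt s t p = lsrc s t q) w"
  by (simp add: walk_def successively_conv_nth)
lemma reduced_iff: "reduced w \<longleftrightarrow> successively (\<lambda>p q. q \<noteq> linv p) w"
  by (simp add: reduced_def successively_conv_nth)

lemma walk_winv[simp]: "walk A s t (winv w) \<longleftrightarrow> walk A s t w"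
  by (auto simp: walk_iff winv_def successively_map eq_commute[of "lsrc s t _"])
lemma reduced_winv[simp]: "reduced (winv w) \<longleftrightarrow> reduced w"
  unfolding reduced_iff winv_def successively_rev successively_map
  by (rule successively_cong) fastforce+

lemma sublist_winv: "sublist xs ys \<Longrightarrow> sublist (winv xs) (winv ys)"
  by (auto simp: sublist_def) (metis append.assoc winv_append)
lemma sublist_winv_iff[simp]: "sublist (winv xs) (winv ys) \<longleftrightarrow> sublist xs ys"
  by (metis sublist_winv winv_winv)

lemma is_string_winv[simp]: "is_string A s t Rel (winv w) \<longleftrightarrow> is_string A s t Rel w"
proof -
  have "sublist (map Dir p) (winv w) \<longleftrightarrow> sublist (winv (map Dir p)) w" for p
    by (metis sublist_winv_iff winv_winv)
  moreover have "sublist (winv (map Dir p)) (winv w) \<longleftrightarrow> sublist (map Dir p) w" for p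
    by simp
  ultimately show ?thesis unfolding is_string_def by auto
qed

lemma walk_sublist: "walk A s t w \<Longrightarrow> sublist v w \<Longrightarrow> walk A s t v"
  by (auto simp: walk_iff sublist_def successively_append_iff)
lemma reduced_sublist: "reduced w \<Longrightarrow> sublist v w \<Longrightarrow> reduced v"
  by (auto simp: reduced_iff sublist_def successively_append_iff)
lemma is_string_sublist: "is_string A s t Rel w \<Longrightarrow> sublist v w \<Longrightarrow> is_string A s t Rel v"
  unfolding is_string_def using walk_sublist reduced_sublist sublist_order.order_trans by metis

lemma concat_replicate_comm: "concat (replicate n b) @ b = b @ concat (replicate n b)"
  by (induction n) auto

lemma concat_replicate_winv: "concat (replicate n (winv b)) = winv (concat (replicate n b))"
proof (induction n)
  case (Suc n) then show ?case by (simp add: concat_replicate_comm[symmetric])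
qed simp

lemma cyclic_walk_winv[simp]: "cyclic_walk s t (winv w) \<longleftrightarrow> cyclic_walk s t w"
  by (cases w rule: rev_cases) (auto simp: cyclic_walk_def winv_def hd_map last_map hd_rev last_rev)

lemma is_band_winv: "is_band A s t Rel b \<Longrightarrow> is_band A s t Rel (winv b)"
  unfolding is_band_def
proof (intro conjI notI allI; (elim conjE)?)
  fix n assume "\<forall>n. is_string A s t Rel (concat (replicate n b))"
  then show "is_string A s t Rel (concat (replicate n (winv b)))" by (simp add: concat_replicate_winv)
next
  assume np: "\<not> (\<exists>c m. 2 \<le> m \<and> is_string A s t Rel c \<and> cyclic_walk s t c \<and> b = concat (replicate m c))"
    and "\<exists>c m. 2 \<le> m \<and> is_string A s t Rel c \<and> cyclic_walk s t c \<and> winv b = concat (replicate m c)"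
  then obtain c m where "2 \<le> m" "is_string A s t Rel c" "cyclic_walk s t c" "winv b = concat (replicate m c)" by blast
  then have "b = concat (replicate m (winv c))" by (metis concat_replicate_winv winv_winv)
  moreover have "is_string A s t Rel (winv c)" "cyclic_walk s t (winv c)"
    using \<open>is_string A s t Rel c\<close> \<open>cyclic_walk s t c\<close> by auto
  ultimately show False using np \<open>2 \<le> m\<close> by blast
qed auto


definition per :: "'a list \<Rightarrow> int \<Rightarrow> 'a" where
  "per b z = b ! nat (z mod int (length b))"

definition okp :: "('e \<Rightarrow> 'v) \<Rightarrow> ('e \<Rightarrow> 'v) \<Rightarrow> 'e letter \<Rightarrow> 'e letter \<Rightarrow> bool" where
  "okp s t p q \<longleftrightarrow> ltgt s t p = lsrc s t q \<and> q \<noteq> linv p"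

definition zero2 :: "'e list set \<Rightarrow> 'e letter \<Rightarrow> 'e letter \<Rightarrow> bool" where
  "zero2 Rel p q \<longleftrightarrow> (\<exists>\<alpha> \<beta>. p = Dir \<alpha> \<and> q = Dir \<beta> \<and> in_I Rel [\<alpha>,\<beta>]) \<or>
                    (\<exists>\<alpha> \<beta>. p = Inv \<alpha> \<and> q = Inv \<beta> \<and> in_I Rel [\<beta>,\<alpha>])"

lemma per_in_set: "b \<noteq> [] \<Longrightarrow> per b z \<in> set b"
  unfolding per_def by (rule nth_mem) (simp add: nat_less_iff)

lemma per_add: "per b (z + int (length b) * k) = per b z"
  unfolding per_def by simp

lemma per_nth: "0 \<le> j \<Longrightarrow> j < int (length b) \<Longrightarrow> per b j = b ! nat j"
  unfolding per_def by simp

lemma per_surj: "l \<in> set b \<Longrightarrow> \<exists>j. 0 \<le> j \<and> j < int (length b) \<and> per b j = l"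
proof -
  assume "l \<in> set b"
  then obtain i where "i < length b" "b ! i = l" by (auto simp: in_set_conv_nth)
  then show ?thesis by (intro exI[of _ "int i"]) (simp add: per_nth)
qed

lemma per_pair:
  assumes "b \<noteq> []"
  shows "per b z = (b @ b) ! nat (z mod int (length b))"
    "per b (z + 1) = (b @ b) ! Suc (nat (z mod int (length b)))"
    "Suc (nat (z mod int (length b))) < length (b @ b)"
proof -
  let ?L = "int (length b)"
  have L: "?L > 0" using assms by simp
  have r: "0 \<le> z mod ?L" "z mod ?L < ?L" using L by auto
  show "per b z = (b @ b) ! nat (z mod ?L)" using r unfolding per_def by (simp add: nth_append nat_less_iff)
  have "nat (z mod ?L) < length b" using r by (simp add: nat_less_iff)
  then show "Suc (nat (z mod ?L)) < length (b @ b)" using assms by (cases b) auto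
  show "per b (z + 1) = (b @ b) ! Suc (nat (z mod ?L))"
  proof (cases "z mod ?L + 1 < ?L")
    case True
    have "(z + 1) mod ?L = (z mod ?L + 1) mod ?L" by (simp add: mod_add_left_eq)
    also have "\<dots> = z mod ?L + 1" using True r by (simp add: mod_pos_pos_trivial)
    finally have "(z + 1) mod ?L = z mod ?L + 1" .
    then show ?thesis using True r unfolding per_def
      by (simp add: nth_append nat_less_iff Suc_nat_eq_nat_zadd1 add.commute)
  next
    case False
    then have e: "z mod ?L + 1 = ?L" using r by simp
    have "(z + 1) mod ?L = (z mod ?L + 1) mod ?L" by (simp add: mod_add_left_eq)
    then have "(z + 1) mod ?L = 0" using e by simp
    moreover have "Suc (nat (z mod ?L)) = length b" using e r by linarith
    ultimately show ?thesis unfolding per_def using assms by (simp add: nth_append)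
  qed
qed

lemma sublist_pair: "Suc i < length w \<Longrightarrow> sublist [w ! i, w ! Suc i] w"
proof -
  assume a: "Suc i < length w"
  have "w = take i w @ [w ! i, w ! Suc i] @ drop (Suc (Suc i)) w"
    using a by (simp add: Cons_nth_drop_Suc)
  then show ?thesis unfolding sublist_def by blast
qed

lemma band_adj:
  assumes "is_band A s t Rel b"
  shows "okp s t (per b z) (per b (z+1))" "\<not> zero2 Rel (per b z) (per b (z+1))" "arr (per b z) \<in> A"
proof -
  have ne: "b \<noteq> []" using assms by (simp add: is_band_def cyclic_walk_def)
  have str: "is_string A s t Rel (b @ b)" using assms unfolding is_band_def
    by (metis append.right_neutral concat.simps concat_replicate_trivial numeral_2_eq_2 replicate_Suc replicate_0)
  note pp = per_pair[OF ne, of z]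
  let ?i = "nat (z mod int (length b))"
  have w: "walk A s t (b@b)" and r: "reduced (b@b)" using str by (auto simp: is_string_def)
  have c1: "ltgt s t ((b@b) ! ?i) = lsrc s t ((b@b) ! Suc ?i)" using w pp(3) unfolding walk_def by blast
  have c2: "(b@b) ! Suc ?i \<noteq> linv ((b@b) ! ?i)" using r pp(3) unfolding reduced_def by blast
  show "okp s t (per b z) (per b (z+1))"
    unfolding okp_def pp(1,2) using c1 c2 by simp
  show "arr (per b z) \<in> A" using assms per_in_set[OF ne] unfolding is_band_def is_string_def walk_def by blast
  show "\<not> zero2 Rel (per b z) (per b (z+1))"
  proof
    assume z: "zero2 Rel (per b z) (per b (z+1))"
    have sub: "sublist [per b z, per b (z+1)] (b @ b)" unfolding pp(1,2) using pp(3) by (rule sublist_pair)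
    have A2: "arr (per b z) \<in> A" "arr (per b (z+1)) \<in> A"
      using assms per_in_set[OF ne] unfolding is_band_def is_string_def walk_def by blast+
    have con: "ltgt s t (per b z) = lsrc s t (per b (z+1))" unfolding pp(1,2) by (rule c1)
    from z show False
    proof (unfold zero2_def, elim disjE exE conjE)
      fix \<alpha> \<beta> assume e: "per b z = Dir \<alpha>" "per b (z + 1) = Dir \<beta>" "in_I Rel [\<alpha>, \<beta>]"
      have "is_path A s t [\<alpha>,\<beta>]" using A2 con e by (auto simp: is_path_def)
      moreover have "sublist (map Dir [\<alpha>,\<beta>]) (b@b)" using sub e by simp
      ultimately show False using str e(3) unfolding is_string_def by blast
    next
      fix \<alpha> \<beta> assume e: "per b z = Inv \<alpha>" "per b (z + 1) = Inv \<beta>" "in_I Rel [\<beta>, \<alpha>]"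
      have "is_path A s t [\<beta>,\<alpha>]" using A2 con e by (auto simp: is_path_def)
      moreover have "sublist (winv (map Dir [\<beta>,\<alpha>])) (b@b)" using sub e by (simp add: winv_def)
      ultimately show False using str e(3) unfolding is_string_def by blast
    qed
  qed
qed


definition valid where
  "valid A s t Rel p q \<longleftrightarrow> okp s t p q \<and> \<not> zero2 Rel p q \<and> arr p \<in> A \<and> arr q \<in> A"

lemma card2F: "finite S \<Longrightarrow> x \<in> S \<Longrightarrow> y \<in> S \<Longrightarrow> x \<noteq> y \<Longrightarrow> card S \<le> 1 \<Longrightarrow> False"
proof -
  assume "finite S" "x \<in> S" "y \<in> S" "x \<noteq> y" "card S \<le> 1"
  then have "card {x,y} \<le> card S" by (intro card_mono) auto
  then show False using \<open>x \<noteq> y\<close> \<open>card S \<le> 1\<close> by simp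
qed

lemma card3F: "finite S \<Longrightarrow> x \<in> S \<Longrightarrow> y \<in> S \<Longrightarrow> z \<in> S \<Longrightarrow> x \<noteq> y \<Longrightarrow> x \<noteq> z \<Longrightarrow> y \<noteq> z \<Longrightarrow> card S \<le> 2 \<Longrightarrow> False"
proof -
  assume "finite S" "x \<in> S" "y \<in> S" "z \<in> S" "x \<noteq> y" "x \<noteq> z" "y \<noteq> z" "card S \<le> 2"
  then have "card {x,y,z} \<le> card S" by (intro card_mono) auto
  moreover have "card {x,y,z} = 3" using \<open>x \<noteq> y\<close> \<open>x \<noteq> z\<close> \<open>y \<noteq> z\<close> by simp
  ultimately show False using \<open>card S \<le> 2\<close> by simp
qed

lemma SA_facts:
  assumes "string_algebra V A s t Rel"
  shows "finite A"
    "a \<in> A \<Longrightarrow> card {b\<in>A. s b = t a \<and> \<not> in_I Rel [a, b]} \<le> 1"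
    "a \<in> A \<Longrightarrow> card {c\<in>A. t c = s a \<and> \<not> in_I Rel [c, a]} \<le> 1"
    "a \<in> A \<Longrightarrow> card {b\<in>A. t b = t a} \<le> 2"
    "a \<in> A \<Longrightarrow> card {b\<in>A. s b = s a} \<le> 2"
  using assms unfolding string_algebra_def by auto

lemma V2:
  assumes SA: "string_algebra V A s t Rel"
    and v1: "valid A s t Rel m l1" and v2: "valid A s t Rel m l2" and ne: "l1 \<noteq> l2"
  shows "\<exists>\<beta> \<gamma>. (l1 = Dir \<beta> \<and> l2 = Inv \<gamma> \<or> l1 = Inv \<gamma> \<and> l2 = Dir \<beta>) \<and>
     okp s t (Dir \<gamma>) (Dir \<beta>) \<and> zero2 Rel (Dir \<gamma>) (Dir \<beta>) \<and> \<gamma> \<in> A \<and> \<beta> \<in> A"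
proof -
  note F = SA_facts[OF SA]
  have fin: "finite {b\<in>A. P b}" for P using F(1) by simp
  show ?thesis
  proof (cases m)
    case (Dir \<alpha>)
    have aA: "\<alpha> \<in> A" using v1 Dir by (simp add: valid_def)
    show ?thesis
    proof (cases l1; cases l2)
      fix \<beta>1 \<beta>2 assume l: "l1 = Dir \<beta>1" "l2 = Dir \<beta>2"
      have "\<beta>1 \<in> {b\<in>A. s b = t \<alpha> \<and> \<not> in_I Rel [\<alpha>, b]}" "\<beta>2 \<in> {b\<in>A. s b = t \<alpha> \<and> \<not> in_I Rel [\<alpha>, b]}"
        using v1 v2 Dir l by (auto simp: valid_def okp_def zero2_def)
      then show ?thesis using card2F[OF fin _ _ _ F(2)[OF aA]] ne l by auto
    next
      fix \<beta>1 \<gamma>2 assume l: "l1 = Dir \<beta>1" "l2 = Inv \<gamma>2"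
      have "in_I Rel [\<gamma>2, \<beta>1]"
      proof (rule ccontr)
        assume "\<not> in_I Rel [\<gamma>2, \<beta>1]"
        then have "\<gamma>2 \<in> {c\<in>A. t c = s \<beta>1 \<and> \<not> in_I Rel [c, \<beta>1]}" "\<alpha> \<in> {c\<in>A. t c = s \<beta>1 \<and> \<not> in_I Rel [c, \<beta>1]}"
          using v1 v2 Dir l aA by (auto simp: valid_def okp_def zero2_def)
        moreover have "\<gamma>2 \<noteq> \<alpha>" using v2 Dir l by (auto simp: valid_def okp_def)
        moreover have "\<beta>1 \<in> A" using v1 l by (simp add: valid_def)
        ultimately show False using card2F[OF fin _ _ _ F(3)] by blast
      qed
      then show ?thesis using v1 v2 Dir l by (auto simp: valid_def okp_def zero2_def)
    next
      fix \<gamma>1 \<beta>2 assume l: "l1 = Inv \<gamma>1" "l2 = Dir \<beta>2"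
      have "in_I Rel [\<gamma>1, \<beta>2]"
      proof (rule ccontr)
        assume "\<not> in_I Rel [\<gamma>1, \<beta>2]"
        then have "\<gamma>1 \<in> {c\<in>A. t c = s \<beta>2 \<and> \<not> in_I Rel [c, \<beta>2]}" "\<alpha> \<in> {c\<in>A. t c = s \<beta>2 \<and> \<not> in_I Rel [c, \<beta>2]}"
          using v1 v2 Dir l aA by (auto simp: valid_def okp_def zero2_def)
        moreover have "\<gamma>1 \<noteq> \<alpha>" using v1 Dir l by (auto simp: valid_def okp_def)
        moreover have "\<beta>2 \<in> A" using v2 l by (simp add: valid_def)
        ultimately show False using card2F[OF fin _ _ _ F(3)] by blast
      qed
      then show ?thesis using v1 v2 Dir l by (auto simp: valid_def okp_def zero2_def)
    next
      fix \<gamma>1 \<gamma>2 assume l: "l1 = Inv \<gamma>1" "l2 = Inv \<gamma>2"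
      have "\<gamma>1 \<in> {b\<in>A. t b = t \<alpha>}" "\<gamma>2 \<in> {b\<in>A. t b = t \<alpha>}" "\<alpha> \<in> {b\<in>A. t b = t \<alpha>}"
        using v1 v2 Dir l aA by (auto simp: valid_def okp_def)
      moreover have "\<gamma>1 \<noteq> \<alpha>" "\<gamma>2 \<noteq> \<alpha>" using v1 v2 Dir l by (auto simp: valid_def okp_def)
      ultimately show ?thesis using card3F[OF fin _ _ _ _ _ _ F(4)[OF aA]] ne l by auto
    qed
  next
    case (Inv \<alpha>)
    have aA: "\<alpha> \<in> A" using v1 Inv by (simp add: valid_def)
    show ?thesis
    proof (cases l1; cases l2)
      fix \<beta>1 \<beta>2 assume l: "l1 = Dir \<beta>1" "l2 = Dir \<beta>2"
      have "\<beta>1 \<in> {b\<in>A. s b = s \<alpha>}" "\<beta>2 \<in> {b\<in>A. s b = s \<alpha>}" "\<alpha> \<in> {b\<in>A. s b = s \<alpha>}"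
        using v1 v2 Inv l aA by (auto simp: valid_def okp_def)
      moreover have "\<beta>1 \<noteq> \<alpha>" "\<beta>2 \<noteq> \<alpha>" using v1 v2 Inv l by (auto simp: valid_def okp_def)
      ultimately show ?thesis using card3F[OF fin _ _ _ _ _ _ F(5)[OF aA]] ne l by auto
    next
      fix \<beta>1 \<gamma>2 assume l: "l1 = Dir \<beta>1" "l2 = Inv \<gamma>2"
      have gA: "\<gamma>2 \<in> A" using v2 l by (simp add: valid_def)
      have "in_I Rel [\<gamma>2, \<beta>1]"
      proof (rule ccontr)
        assume "\<not> in_I Rel [\<gamma>2, \<beta>1]"
        then have "\<beta>1 \<in> {b\<in>A. s b = t \<gamma>2 \<and> \<not> in_I Rel [\<gamma>2, b]}" "\<alpha> \<in> {b\<in>A. s b = t \<gamma>2 \<and> \<not> in_I Rel [\<gamma>2, b]}"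
          using v1 v2 Inv l aA by (auto simp: valid_def okp_def zero2_def)
        moreover have "\<beta>1 \<noteq> \<alpha>" using v1 Inv l by (auto simp: valid_def okp_def)
        ultimately show False using card2F[OF fin _ _ _ F(2)[OF gA]] by blast
      qed
      then show ?thesis using v1 v2 Inv l by (auto simp: valid_def okp_def zero2_def)
    next
      fix \<gamma>1 \<beta>2 assume l: "l1 = Inv \<gamma>1" "l2 = Dir \<beta>2"
      have gA: "\<gamma>1 \<in> A" using v1 l by (simp add: valid_def)
      have "in_I Rel [\<gamma>1, \<beta>2]"
      proof (rule ccontr)
        assume "\<not> in_I Rel [\<gamma>1, \<beta>2]"
        then have "\<beta>2 \<in> {b\<in>A. s b = t \<gamma>1 \<and> \<not> in_I Rel [\<gamma>1, b]}" "\<alpha> \<in> {b\<in>A. s b = t \<gamma>1 \<and> \<not> in_I Rel [\<gamma>1, b]}"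
          using v1 v2 Inv l aA by (auto simp: valid_def okp_def zero2_def)
        moreover have "\<beta>2 \<noteq> \<alpha>" using v2 Inv l by (auto simp: valid_def okp_def)
        ultimately show False using card2F[OF fin _ _ _ F(2)[OF gA]] by blast
      qed
      then show ?thesis using v1 v2 Inv l by (auto simp: valid_def okp_def zero2_def)
    next
      fix \<gamma>1 \<gamma>2 assume l: "l1 = Inv \<gamma>1" "l2 = Inv \<gamma>2"
      have "\<gamma>1 \<in> {c\<in>A. t c = s \<alpha> \<and> \<not> in_I Rel [c, \<alpha>]}" "\<gamma>2 \<in> {c\<in>A. t c = s \<alpha> \<and> \<not> in_I Rel [c, \<alpha>]}"
        using v1 v2 Inv l by (auto simp: valid_def okp_def zero2_def)
      then show ?thesis using card2F[OF fin _ _ _ F(3)[OF aA]] ne l by auto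
    qed
  qed
qed

lemma V3:
  assumes SA: "string_algebra V A s t Rel"
    and "valid A s t Rel e f" "okp s t e h" "okp s t e h'" "arr h \<in> A" "arr h' \<in> A"
    "f \<noteq> h" "f \<noteq> h'" "h \<noteq> h'"
  shows "zero2 Rel e h \<or> zero2 Rel e h'"
proof (rule ccontr)
  assume "\<not> (zero2 Rel e h \<or> zero2 Rel e h')"
  then have v: "valid A s t Rel e h" "valid A s t Rel e h'" using assms by (auto simp: valid_def)
  have isd: "\<And>x y. valid A s t Rel e x \<Longrightarrow> valid A s t Rel e y \<Longrightarrow> x \<noteq> y \<Longrightarrow> (\<exists>a. x = Dir a) \<noteq> (\<exists>a. y = Dir a)"
    using V2[OF SA] by fastforce
  show False using isd[OF assms(2) v(1) assms(7)] isd[OF assms(2) v(2) assms(8)] isd[OF v assms(9)] by blast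
qed


lemma okp_walk_reduced:
  "successively (okp s t) W \<Longrightarrow> \<forall>l\<in>set W. arr l \<in> A \<Longrightarrow> walk A s t W \<and> reduced W"
  unfolding walk_iff reduced_iff by (auto elim: successively_mono simp: okp_def)

lemma DZ:
  assumes band: "is_band A s t Rel B"
    and ok: "successively (okp s t) W" and lt: "\<forall>l\<in>set W. arr l \<in> A"
    and W: "W = [p,q] @ M1 @ B @ M2 @ [p,q]"
    and z: "zero2 Rel p q"
  shows "has_DOZE A s t Rel"
proof -
  have wr: "walk A s t W" "reduced W" using okp_walk_reduced[OF ok lt] by auto
  have pq: "okp s t p q" using ok W by simp
  have wM1: "walk A s t M1" using walk_sublist[OF wr(1)] W by (metis sublist_appendI sublist_order.dual_order.trans append.assoc sublist_append_leftI sublist_append_rightI)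
  have wM2: "walk A s t M2" using walk_sublist[OF wr(1)] W by (metis sublist_append_leftI sublist_append_rightI sublist_order.dual_order.trans append.assoc)
  from z show ?thesis
  proof (unfold zero2_def, elim disjE exE conjE)
    fix \<alpha> \<beta> assume e: "p = Dir \<alpha>" "q = Dir \<beta>" "in_I Rel [\<alpha>, \<beta>]"
    have P: "is_path A s t [\<alpha>,\<beta>]" using pq lt W e by (auto simp: is_path_def okp_def)
    have "map Dir [\<alpha>,\<beta>] = [p,q]" using e by simp
    then show ?thesis unfolding has_DOZE_def using P e(3) wM1 wM2 band wr W
      by (intro exI[of _ "[\<alpha>,\<beta>]"] exI[of _ M1] exI[of _ B] exI[of _ M2]) auto
  next
    fix \<alpha> \<beta> assume e: "p = Inv \<alpha>" "q = Inv \<beta>" "in_I Rel [\<beta>, \<alpha>]"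
    have P: "is_path A s t [\<beta>,\<alpha>]" using pq lt W e by (auto simp: is_path_def okp_def)
    have m: "map Dir [\<beta>,\<alpha>] = winv [p,q]" using e by (simp add: winv_def)
    have WW: "winv W = map Dir [\<beta>,\<alpha>] @ winv M2 @ winv B @ winv M1 @ map Dir [\<beta>,\<alpha>]"
      using W m by simp
    have "walk A s t (winv M1)" "walk A s t (winv M2)" using wM1 wM2 by auto
    moreover have "walk A s t (winv W)" "reduced (winv W)" using wr by auto
    moreover have "is_band A s t Rel (winv B)" using band by (rule is_band_winv)
    ultimately show ?thesis unfolding has_DOZE_def using P e(3) WW
      by (intro exI[of _ "[\<beta>,\<alpha>]"] exI[of _ "winv M2"] exI[of _ "winv B"] exI[of _ "winv M1"]) metis
  qed
qed

definition seg :: "(int \<Rightarrow> 'a) \<Rightarrow> int \<Rightarrow> nat \<Rightarrow> 'a list" where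
  "seg F a n = map (\<lambda>j. F (a + int j)) [0..<n]"

lemma seg_ok: "(\<And>z. P (F z) (F (z+1))) \<Longrightarrow> successively P (seg F a n)"
  unfolding seg_def successively_conv_nth
proof (intro allI impI)
  fix i assume "\<And>z. P (F z) (F (z+1))" "Suc i < length (map (\<lambda>j. F (a + int j)) [0..<n])"
  then show "P (map (\<lambda>j. F (a + int j)) [0..<n] ! i) (map (\<lambda>j. F (a + int j)) [0..<n] ! Suc i)"
  proof -
    assume h: "\<And>z. P (F z) (F (z+1))" "Suc i < length (map (\<lambda>j. F (a + int j)) [0..<n])"
    have "a + int (Suc i) = (a + int i) + 1" by simp
    have e2: "F (a + int (Suc i)) = F (a + int i + 1)" by (simp add: algebra_simps)
    show ?thesis using h(1)[of "a + int i"] h(2) by (simp only: length_map length_upt nth_map_upt e2) (simp add: ac_simps)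
  qed
qed

lemma seg_append: "seg F a (m + n) = seg F a m @ seg F (a + int m) n"
  by (rule nth_equalityI) (auto simp: seg_def nth_append add.assoc)

lemma seg_hd: "n > 0 \<Longrightarrow> hd (seg F a n) = F a"
  unfolding seg_def by (simp add: hd_map)
lemma seg_last: "n > 0 \<Longrightarrow> last (seg F a n) = F (a + int n - 1)"
  unfolding seg_def by (simp add: last_map of_nat_diff algebra_simps)
lemma seg_set: "set (seg F a n) \<subseteq> range F"
  unfolding seg_def by auto
lemma seg_ne: "n > 0 \<Longrightarrow> seg F a n \<noteq> []"
  unfolding seg_def by simp

lemma per_mod: "z mod int (length b) = z' mod int (length b) \<Longrightarrow> per b z = per b z'"
  unfolding per_def by simp

lemma seg_period: "c mod int (length b) = 0 \<Longrightarrow> seg (per b) c (length b) = b"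
proof (rule nth_equalityI)
  assume c: "c mod int (length b) = 0"
  show "length (seg (per b) c (length b)) = length b" by (simp add: seg_def)
  fix i assume "i < length (seg (per b) c (length b))"
  then have i: "i < length b" by (simp add: seg_def)
  have "(c + int i) mod int (length b) = int i mod int (length b)" using c by (simp add: mod_add_left_eq[symmetric])
  then have "per b (c + int i) = per b (int i)" by (rule per_mod)
  also have "\<dots> = b ! i" using i by (simp add: per_nth)
  finally show "seg (per b) c (length b) ! i = b ! i" using i by (simp add: seg_def)
qed

lemma T:
  assumes bX: "is_band A s t Rel X" and bY: "is_band A s t Rel Y"
    and q: "q \<in> set X" and u: "u \<in> set X" and p: "p \<in> set Y" and v: "v \<in> set Y"
    and pq: "okp s t p q" and z: "zero2 Rel p q" and uv: "okp s t u v"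
  shows "has_DOZE A s t Rel"
proof -
  define LX where "LX = int (length X)"
  define LY where "LY = int (length Y)"
  have neX: "X \<noteq> []" using bX by (simp add: is_band_def cyclic_walk_def)
  have neY: "Y \<noteq> []" using bY by (simp add: is_band_def cyclic_walk_def)
  have LX0: "LX > 0" "LY > 0" using neX neY by (auto simp: LX_def LY_def)
  obtain x0 where x0: "0 \<le> x0" "x0 < LX" "per X x0 = q" using per_surj[OF q] LX_def by auto
  obtain x1 where x1: "0 \<le> x1" "x1 < LX" "per X x1 = u" using per_surj[OF u] LX_def by auto
  obtain y0 where y0: "0 \<le> y0" "y0 < LY" "per Y y0 = p" using per_surj[OF p] LY_def by auto
  obtain y1 where y1: "0 \<le> y1" "y1 < LY" "per Y y1 = v" using per_surj[OF v] LY_def by auto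
  define n1 where "n1 = nat (LX - x0 - 1)"
  define n3 where "n3 = nat (x1 + LX + 1)"
  define N2 where "N2 = nat ((y0 - y1 - 1) mod LY) + 1"
  define M1 where "M1 = seg (per X) (x0 + 1) n1"
  define M3 where "M3 = seg (per X) (2 * LX) n3"
  define S2 where "S2 = seg (per Y) y1 N2"
  define S1 where "S1 = seg (per X) (x0 + 1) (n1 + length X + n3)"
  have a1: "x0 + 1 + int n1 = LX" using x0 by (simp add: n1_def)
  have a2: "x0 + 1 + int (n1 + length X) = 2 * LX" using a1 LX_def by simp
  have sp: "seg (per X) LX (length X) = X" using seg_period[of LX X] by (simp add: LX_def)
  have S1e: "S1 = M1 @ X @ M3"
    unfolding S1_def M1_def M3_def seg_append a2 using a1 sp by simp
  define W where "W = [p,q] @ M1 @ X @ (M3 @ S2) @ [p,q]"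
  have W2: "W = [p,q] @ S1 @ S2 @ [p,q]" by (simp add: W_def S1e)
  have adjX: "\<And>z. okp s t (per X z) (per X (z+1))" using band_adj[OF bX] by blast
  have adjY: "\<And>z. okp s t (per Y z) (per Y (z+1))" using band_adj[OF bY] by blast
  have S1ne: "S1 \<noteq> []" and S2ne: "S2 \<noteq> []" using neX by (auto simp: S1_def S2_def N2_def seg_ne)
  have hS1: "hd S1 = per X (x0 + 1)" by (simp add: S1_def seg_hd neX)
  have lS1: "last S1 = u"
  proof -
    have "last S1 = per X (x0 + 1 + int (n1 + length X + n3) - 1)" by (simp add: S1_def seg_last neX)
    also have "x0 + 1 + int (n1 + length X + n3) - 1 = x1 + 3 * LX" 
      using x0 x1 by (simp add: n1_def n3_def LX_def)
    also have "per X (x1 + 3 * LX) = per X x1" by (rule per_mod) (simp add: LX_def)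
    finally show ?thesis using x1 by simp
  qed
  have hS2: "hd S2 = v" using y1 by (simp add: S2_def seg_hd N2_def)
  have lS2: "okp s t (last S2) p"
  proof -
    have "last S2 = per Y (y1 + int N2 - 1)" by (simp add: S2_def seg_last N2_def)
    moreover have "per Y (y1 + int N2 - 1 + 1) = p"
    proof -
      have "(y1 + int N2 - 1 + 1) mod LY = y0 mod LY"
      proof -
        define k where "k = - ((y0 - y1 - 1) div LY)"
        have "(y0-y1-1) mod LY = (y0-y1-1) + LY*k"
          using div_mult_mod_eq[of "y0-y1-1" LY] by (simp add: k_def algebra_simps)
        moreover have "0 \<le> (y0-y1-1) mod LY" using LX0 by simp
        ultimately have "y1 + int N2 - 1 + 1 = y0 + LY * k" using LX0 by (simp add: N2_def)
        then show ?thesis by simp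
      qed
      then show ?thesis using y0 by (metis per_mod LY_def)
    qed
    ultimately show ?thesis using adjY by metis
  qed
  have okW: "successively (okp s t) W"
  proof -
    have s1: "successively (okp s t) S1" unfolding S1_def by (rule seg_ok) (rule adjX)
    have s2: "successively (okp s t) S2" unfolding S2_def by (rule seg_ok) (rule adjY)
    have j1: "okp s t q (hd S1)" using adjX[of x0] x0(3) hS1 by simp
    show ?thesis unfolding W2 successively_append_iff using S1ne S2ne s1 s2 j1 pq lS1 hS2 lS2 uv
      by (simp add: hd_append)
  qed
  have letW: "\<forall>l\<in>set W. arr l \<in> A"
  proof -
    have "set S1 \<subseteq> set X" "set S2 \<subseteq> set Y" using seg_set per_in_set neX neY by (fastforce simp: S1_def S2_def)+
    moreover have "\<forall>l\<in>set X. arr l \<in> A" "\<forall>l\<in>set Y. arr l \<in> A"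
      using bX bY by (auto simp: is_band_def is_string_def walk_def)
    ultimately show ?thesis using p q unfolding W2 by auto
  qed
  show ?thesis using DZ[OF bX okW letW W_def z] .
qed


lemma concat_replicate_nth:
  "length c = n \<Longrightarrow> n > 0 \<Longrightarrow> j < m * n \<Longrightarrow> concat (replicate m c) ! j = c ! (j mod n)"
proof (induction m arbitrary: j)
  case (Suc m)
  show ?case
  proof (cases "j < n")
    case True then show ?thesis using Suc by (simp add: nth_append)
  next
    case False
    then have "concat (replicate (Suc m) c) ! j = concat (replicate m c) ! (j - n)"
      using Suc by (simp add: nth_append)
    also have "\<dots> = c ! ((j - n) mod n)" using Suc False by (intro Suc.IH) auto
    also have "(j - n) mod n = j mod n" using False by (simp add: mod_if)
    finally show ?thesis .
  qed
qed simp

lemma length_concat_replicate: "length (concat (replicate m c)) = m * length c"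
  by (induction m) auto

lemma period_mult:
  fixes G :: "int \<Rightarrow> 'a" and p :: int
  assumes "\<And>z. G (z + p) = G z"
  shows "G (z + k * p) = G z"
proof -
  have nat: "G (z + int n * p) = G z" for n z
  proof (induction n arbitrary: z)
    case (Suc n)
    have "G (z + int (Suc n) * p) = G ((z + int n * p) + p)" by (simp add: algebra_simps)
    also have "\<dots> = G (z + int n * p)" by (rule assms)
    finally show ?case using Suc by simp
  qed simp
  show ?thesis
  proof (cases "k \<ge> 0")
    case True then show ?thesis using nat[where n="nat k"] by simp
  next
    case False
    have "G z = G (z + k * p + int (nat (-k)) * p)" using False by (simp add: algebra_simps)
    also have "\<dots> = G (z + k * p)" by (rule nat)
    finally show ?thesis by simp
  qed
qed

lemma primitive:
  assumes b: "is_band A s t Rel b" and d: "d > 0" "d dvd int (length b)"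
    and per: "\<And>w. per b (w + d) = per b w"
  shows "d = int (length b)"
proof (rule ccontr)
  assume ne: "d \<noteq> int (length b)"
  let ?L = "length b"
  have bne: "b \<noteq> []" using b by (simp add: is_band_def cyclic_walk_def)
  have dle: "d \<le> int ?L" using zdvd_imp_le[OF d(2)] bne by simp
  define n where "n = nat d"
  define m where "m = ?L div n"
  have n0: "n > 0" "n < ?L" using d dle ne by (auto simp: n_def)
  have "int n = d" using d by (simp add: n_def)
  then have "int n dvd int ?L" using d(2) by simp
  then have ndvd: "n dvd ?L" by (metis int_dvd_int_iff)
  then have Lmn: "?L = m * n" by (simp add: m_def)
  have "m \<noteq> 0" "m \<noteq> 1" using n0 Lmn by auto
  then have m2: "m \<ge> 2" by arith
  define c where "c = take n b"
  have lc: "length c = n" using n0 by (simp add: c_def)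
  have pd: "per b (w + int n * k) = per b w" for w k
    using period_mult[of "per b" d w k] per by (simp add: n_def algebra_simps)
  have beq: "b = concat (replicate m c)"
  proof (rule nth_equalityI)
    show "length b = length (concat (replicate m c))" by (simp add: length_concat_replicate lc Lmn)
    fix j assume "j < length b"
    then have j: "j < m * n" using Lmn by simp
    have "b ! j = per b (int j)" using \<open>j < length b\<close> by (simp add: per_nth)
    also have "int j = int (j mod n) + int n * int (j div n)" by (simp flip: of_nat_mult of_nat_add)
    also have "per b \<dots> = per b (int (j mod n))" by (rule pd)
    also have "\<dots> = b ! (j mod n)"
    proof -
      have "j mod n < length b" using n0 by (meson mod_less_divisor order.strict_trans)
      then show ?thesis by (simp add: per_nth)
    qed
    also have "\<dots> = c ! (j mod n)" using n0 by (simp add: c_def)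
    finally show "b ! j = concat (replicate m c) ! j" using concat_replicate_nth[OF lc n0(1) j] by simp
  qed
  have sc: "is_string A s t Rel c"
    using b unfolding is_band_def by (auto intro: is_string_sublist simp: c_def)
  have cw: "cyclic_walk s t c"
  proof -
    have cne: "c \<noteq> []" using n0 bne by (simp add: c_def)
    have hc: "hd c = per b 0" using cne bne by (simp add: c_def hd_conv_nth per_nth)
    have "nat (int n - 1) = n - 1" by simp
    then have lc': "last c = per b (int n - 1)" using cne n0 by (simp add: c_def last_conv_nth per_nth of_nat_diff)
    have "ltgt s t (per b (int n - 1)) = lsrc s t (per b (int n - 1 + 1))"
      using band_adj(1)[OF b] by (simp add: okp_def)
    also have "per b (int n - 1 + 1) = per b 0" using pd[of 0 1] by simp
    finally show ?thesis using cne hc lc' by (simp add: cyclic_walk_def)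
  qed
  show False using b m2 sc cw beq unfolding is_band_def by blast
qed

lemma EQ:
  assumes b1: "is_band A s t Rel b1" and b: "is_band A s t Rel b"
    and agree: "\<And>z. per b1 (i1 + z) = per b (i + z)"
  shows "\<exists>k. b = rotate k b1"
proof -
  define L1 where "L1 = int (length b1)"
  define L2 where "L2 = int (length b)"
  have ne1: "b1 \<noteq> []" using b1 by (simp add: is_band_def cyclic_walk_def)
  have ne2: "b \<noteq> []" using b by (simp add: is_band_def cyclic_walk_def)
  define G where "G z = per b1 (i1 + z)" for z
  have G1: "G (z + L1) = G z" for z unfolding G_def L1_def using per_add[of b1 "i1 + z" 1] by (simp add: add.assoc)
  have G2: "G (z + L2) = G z" for z unfolding G_def agree L2_def using per_add[of b "i + z" 1] by (simp add: add.assoc)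
  define d where "d = gcd L1 L2"
  obtain u v where uv: "u * L1 + v * L2 = d" using bezout_int d_def by blast
  have Gd: "G (z + d) = G z" for z
  proof -
    have "G (z + d) = G (z + u * L1 + v * L2)" using uv by (simp add: algebra_simps)
    also have "\<dots> = G (z + u * L1)" by (rule period_mult[of G L2, OF G2])
    also have "\<dots> = G z" by (rule period_mult[of G L1, OF G1])
    finally show ?thesis .
  qed
  have d0: "d > 0" using ne1 ne2 by (simp add: d_def L1_def L2_def)
  have p1: "per b1 (w + d) = per b1 w" for w using Gd[of "w - i1"] by (simp add: G_def)
  have p2: "per b (w + d) = per b w" for w using Gd[of "w - i"] by (simp add: G_def agree)
  have dL1: "d = L1" using primitive[OF b1 d0 _ p1] by (simp add: d_def L1_def)
  have dL2: "d = L2" using primitive[OF b d0 _ p2] by (simp add: d_def L2_def)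
  have len: "length b = length b1" using dL1 dL2 L1_def L2_def by simp
  define k where "k = nat ((i1 - i) mod L1)"
  have "b = rotate k b1"
  proof (rule nth_equalityI)
    show "length b = length (rotate k b1)" using len by simp
    fix j assume "j < length b"
    then have j: "j < length b1" using len by simp
    have "b ! j = per b (int j)" using j len by (simp add: per_nth)
    also have "\<dots> = per b (i + (int j - i))" by simp
    also have "\<dots> = per b1 (i1 + (int j - i))" by (simp add: agree)
    also have "\<dots> = b1 ! nat ((i1 + (int j - i)) mod L1)" by (simp add: per_def L1_def)
    also have "nat ((i1 + (int j - i)) mod L1) = (k + j) mod length b1"
    proof -
      have "int ((k + j) mod length b1) = (int k + int j) mod L1" by (simp add: L1_def zmod_int)
      also have "\<dots> = ((i1 - i) mod L1 + int j) mod L1" using ne1 by (simp add: k_def L1_def)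
      also have "\<dots> = ((i1 - i) + int j) mod L1" by (simp add: mod_add_left_eq)
      also have "\<dots> = (i1 + (int j - i)) mod L1" by (simp add: algebra_simps)
      finally show ?thesis by simp
    qed
    also have "b1 ! ((k + j) mod length b1) = rotate k b1 ! j" using j by (simp add: nth_rotate)
    finally show "b ! j = rotate k b1 ! j" .
  qed
  then show ?thesis by blast
qed


lemma full_from_fwd:
  assumes ne1: "b1 \<noteq> []" and ne: "b \<noteq> []"
    and fw: "\<And>n::nat. per b1 (i1 + int n) = per b (i + int n)"
  shows "per b1 (i1 + z) = per b (i + z)"
proof -
  define L1 where "L1 = int (length b1)"
  define L where "L = int (length b)"
  have pos: "L1 \<ge> 1" "L \<ge> 1" using ne1 ne by (auto simp: L1_def L_def Suc_le_eq)
  define K where "K = L1 * L * \<bar>z\<bar>"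
  have "L1 * L \<ge> 1" using mult_mono[of 1 L1 1 L] pos by simp
  then have "K \<ge> \<bar>z\<bar>" unfolding K_def by (metis abs_ge_zero mult_le_cancel_right1 not_le)
  then have zK: "z + K \<ge> 0" by simp
  have "per b1 (i1 + z) = per b1 (i1 + z + L1 * (L * \<bar>z\<bar>))" using per_add[of b1 "i1+z" "L * \<bar>z\<bar>"] by (simp add: L1_def)
  also have "\<dots> = per b1 (i1 + int (nat (z + K)))" using zK by (simp add: K_def algebra_simps)
  also have "\<dots> = per b (i + int (nat (z + K)))" by (rule fw)
  also have "\<dots> = per b (i + z + L * (L1 * \<bar>z\<bar>))" using zK by (simp add: K_def algebra_simps)
  also have "\<dots> = per b (i + z)" using per_add[of b "i+z" "L1 * \<bar>z\<bar>"] by (simp add: L_def)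
  finally show ?thesis .
qed

lemma full_from_bwd:
  assumes ne1: "b1 \<noteq> []" and ne: "b \<noteq> []"
    and bw: "\<And>n::nat. per b1 (i1 - int n) = per b (i - int n)"
  shows "per b1 (i1 + z) = per b (i + z)"
proof -
  define L1 where "L1 = int (length b1)"
  define L where "L = int (length b)"
  have pos: "L1 \<ge> 1" "L \<ge> 1" using ne1 ne by (auto simp: L1_def L_def Suc_le_eq)
  define K where "K = L1 * L * \<bar>z\<bar>"
  have "L1 * L \<ge> 1" using mult_mono[of 1 L1 1 L] pos by simp
  then have "K \<ge> \<bar>z\<bar>" unfolding K_def by (metis abs_ge_zero mult_le_cancel_right1 not_le)
  then have zK: "K - z \<ge> 0" by simp
  have "per b1 (i1 + z) = per b1 (i1 + z + L1 * (- L * \<bar>z\<bar>))" using per_add[of b1 "i1+z" "- L * \<bar>z\<bar>"] by (simp add: L1_def)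
  also have "\<dots> = per b1 (i1 - int (nat (K - z)))" using zK by (simp add: K_def algebra_simps)
  also have "\<dots> = per b (i - int (nat (K - z)))" by (rule bw)
  also have "\<dots> = per b (i + z + L * (- L1 * \<bar>z\<bar>))" using zK by (simp add: K_def algebra_simps)
  also have "\<dots> = per b (i + z)" using per_add[of b "i+z" "- L1 * \<bar>z\<bar>"] by (simp add: L_def)
  finally show ?thesis .
qed

lemma band_valid:
  assumes "is_band A s t Rel b"
  shows "valid A s t Rel (per b z) (per b (z+1))"
  using band_adj[OF assms, of z] band_adj(3)[OF assms, of "z+1"] by (simp add: valid_def)

lemma band_ne: "is_band A s t Rel b \<Longrightarrow> b \<noteq> []"
  by (simp add: is_band_def cyclic_walk_def)

lemma CA:
  assumes SA: "string_algebra V A s t Rel"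
    and b1: "is_band A s t Rel b1" and b: "is_band A s t Rel b"
    and m1: "m \<in> set b1" and m: "m \<in> set b"
    and nr: "\<not> (\<exists>k. b = rotate k b1)"
  shows "has_DOZE A s t Rel"
proof -
  have ne1: "b1 \<noteq> []" and ne: "b \<noteq> []" using b1 b by (auto simp: band_ne)
  obtain i1 where i1: "per b1 i1 = m" using per_surj[OF m1] by auto
  obtain i where i: "per b i = m" using per_surj[OF m] by auto
  have nfull: "\<not> (\<forall>z. per b1 (i1 + z) = per b (i + z))" using EQ[OF b1 b] nr by blast
  have "\<exists>n::nat. per b1 (i1 + int n) \<noteq> per b (i + int n)"
    using full_from_fwd[OF ne1 ne] nfull by blast
  then obtain n0 where n0: "per b1 (i1 + int n0) \<noteq> per b (i + int n0)"
    and least0: "\<And>n. n < n0 \<Longrightarrow> per b1 (i1 + int n) = per b (i + int n)"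
    using exists_least_iff[of "\<lambda>n. per b1 (i1 + int n) \<noteq> per b (i + int n)"] by blast
  have "n0 \<noteq> 0"
  proof
    assume "n0 = 0" then show False using n0 i1 i by simp
  qed
  then obtain n' where n': "n0 = Suc n'" by (cases n0) auto
  define m' where "m' = per b1 (i1 + int n')"
  have m'2: "m' = per b (i + int n')" using least0[of n'] n' by (simp add: m'_def)
  define l1 where "l1 = per b1 (i1 + int n' + 1)"
  define l2 where "l2 = per b (i + int n' + 1)"
  have e: "i1 + int n' + 1 = i1 + int n0" "i + int n' + 1 = i + int n0" using n' by simp_all
  have l12: "l1 \<noteq> l2" unfolding l1_def l2_def e by (rule n0)
  have v1: "valid A s t Rel m' l1" unfolding m'_def l1_def by (rule band_valid[OF b1])
  have v2: "valid A s t Rel m' l2" unfolding m'2 l2_def by (rule band_valid[OF b])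
  obtain \<beta> \<gamma> where bg: "l1 = Dir \<beta> \<and> l2 = Inv \<gamma> \<or> l1 = Inv \<gamma> \<and> l2 = Dir \<beta>"
    and okz: "okp s t (Dir \<gamma>) (Dir \<beta>)" "zero2 Rel (Dir \<gamma>) (Dir \<beta>)"
    using V2[OF SA v1 v2 l12] by blast
  have "\<exists>n::nat. per b1 (i1 - int n) \<noteq> per b (i - int n)"
    using full_from_bwd[OF ne1 ne] nfull by blast
  then obtain n1 where n1: "per b1 (i1 - int n1) \<noteq> per b (i - int n1)"
    and least1: "\<And>n. n < n1 \<Longrightarrow> per b1 (i1 - int n) = per b (i - int n)"
    using exists_least_iff[of "\<lambda>n. per b1 (i1 - int n) \<noteq> per b (i - int n)"] by blast
  have "n1 \<noteq> 0"
  proof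
    assume "n1 = 0" then show False using n1 i1 i by simp
  qed
  then obtain n'' where n'': "n1 = Suc n''" by (cases n1) auto
  define k1 where "k1 = per b1 (i1 - int n1)"
  define k2 where "k2 = per b (i - int n1)"
  have k12: "k1 \<noteq> k2" using n1 by (simp add: k1_def k2_def)
  have c: "per b1 (i1 - int n1 + 1) = per b (i - int n1 + 1)"
    using least1[of n''] n'' by (simp add: algebra_simps)
  have "ltgt s t k1 = lsrc s t (per b1 (i1 - int n1 + 1))" using band_adj(1)[OF b1] by (simp add: okp_def k1_def)
  moreover have "ltgt s t k2 = lsrc s t (per b (i - int n1 + 1))" using band_adj(1)[OF b] by (simp add: okp_def k2_def)
  ultimately have tk: "ltgt s t k1 = ltgt s t k2" using c by simp
  have ok12: "okp s t k1 (linv k2)" "okp s t k2 (linv k1)" using tk k12 by (auto simp: okp_def)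
  have k1s: "k1 \<in> set b1" and k2s: "k2 \<in> set b" unfolding k1_def k2_def using per_in_set ne1 ne by auto
  have l1s: "l1 \<in> set b1" and l2s: "l2 \<in> set b" unfolding l1_def l2_def using per_in_set ne1 ne by auto
  from bg show ?thesis
  proof
    assume h: "l1 = Dir \<beta> \<and> l2 = Inv \<gamma>"
    show ?thesis
    proof (rule T[OF b1 is_band_winv[OF b]])
      show "Dir \<beta> \<in> set b1" using h l1s by simp
      show "k1 \<in> set b1" by (rule k1s)
      show "Dir \<gamma> \<in> set (winv b)" using h l2s by (auto intro: image_eqI[of _ _ "Inv \<gamma>"])
      show "linv k2 \<in> set (winv b)" using k2s by simp
    qed (use okz ok12 in auto)
  next
    assume h: "l1 = Inv \<gamma> \<and> l2 = Dir \<beta>"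
    show ?thesis
    proof (rule T[OF b is_band_winv[OF b1]])
      show "Dir \<beta> \<in> set b" using h l2s by simp
      show "k2 \<in> set b" by (rule k2s)
      show "Dir \<gamma> \<in> set (winv b1)" using h l1s by (auto intro: image_eqI[of _ _ "Inv \<gamma>"])
      show "linv k1 \<in> set (winv b1)" using k1s by simp
    qed (use okz ok12 in auto)
  qed
qed

lemma winv_rotate: "\<exists>n. winv (rotate k w) = rotate n (winv w)"
proof -
  let ?L = "length w"
  have r: "rev (rotate k xs) = rotate (length xs - k mod length xs) (rev xs)" for xs
  proof (cases "xs = []")
    case False
    show ?thesis
    proof (cases "k mod length xs = 0")
      case True then show ?thesis using False by (simp add: rotate_rev)
    next
      case F: False
      have "(length xs - k mod length xs) mod length xs = length xs - k mod length xs"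
        using F False by simp
      then show ?thesis using F False by (simp add: rotate_rev rotate_conv_mod[of k xs])
    qed
  qed simp
  show ?thesis unfolding winv_def rotate_map[symmetric] using r by blast
qed

lemma vert_in: "x \<in> walk_verts s t b \<Longrightarrow> is_band A s t Rel b \<Longrightarrow> \<exists>z. ltgt s t (per b z) = x"
proof -
  assume x: "x \<in> walk_verts s t b" and b: "is_band A s t Rel b"
  from x obtain l where l: "l \<in> set b" "x = lsrc s t l \<or> x = ltgt s t l" by (auto simp: walk_verts_def)
  obtain j where j: "per b j = l" using per_surj[OF l(1)] by auto
  have "ltgt s t (per b (j - 1)) = lsrc s t (per b (j - 1 + 1))" using band_adj(1)[OF b] by (simp add: okp_def)
  then show ?thesis using l(2) j by (metis diff_add_cancel)
qed


lemma no_shared_vertex: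
  assumes SA: "string_algebra V A s t Rel"
    and nd: "\<not> has_DOZE A s t Rel"
    and b1: "is_band A s t Rel b1" and b2: "is_band A s t Rel b2"
    and ne: "\<not> band_equiv b1 b2"
    and x1: "x \<in> walk_verts s t b1" and x2: "x \<in> walk_verts s t b2"
  shows False
proof (cases "\<exists>l1\<in>set b1. \<exists>l2\<in>set b2. arr l1 = arr l2")
  case True
  then obtain l1 l2 where l: "l1 \<in> set b1" "l2 \<in> set b2" "arr l1 = arr l2" by blast
  have "l1 = l2 \<or> l1 = linv l2" using l(3) by (cases l1; cases l2) auto
  then show False
  proof
    assume e: "l1 = l2"
    have "\<not> (\<exists>k. b2 = rotate k b1)" using ne by (auto simp: band_equiv_def)
    then show False using CA[OF SA b1 b2 l(1)] l(2) e nd by blast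
  next
    assume e: "l1 = linv l2"
    have "\<not> (\<exists>k. winv b2 = rotate k b1)"
    proof
      assume "\<exists>k. winv b2 = rotate k b1"
      then obtain k where "winv b2 = rotate k b1" by blast
      then have "b2 = winv (rotate k b1)" by (metis winv_winv)
      then obtain n where "b2 = rotate n (winv b1)" using winv_rotate by metis
      then show False using ne by (auto simp: band_equiv_def)
    qed
    moreover have "l1 \<in> set (winv b2)" using e l(2) by simp
    ultimately show False using CA[OF SA b1 is_band_winv[OF b2] l(1)] nd by blast
  qed
next
  case False
  note disj = False
  have ne1: "b1 \<noteq> []" and ne2: "b2 \<noteq> []" using b1 b2 by (auto simp: band_ne)
  obtain z1 where z1: "ltgt s t (per b1 z1) = x" using vert_in[OF x1 b1] by auto
  obtain z2 where z2: "ltgt s t (per b2 z2) = x" using vert_in[OF x2 b2] by auto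
  define e where "e = per b1 z1"
  define f where "f = per b1 (z1 + 1)"
  define g where "g = per b2 z2"
  define h where "h = per b2 (z2 + 1)"
  have es: "e \<in> set b1" "f \<in> set b1" "g \<in> set b2" "h \<in> set b2"
    using per_in_set ne1 ne2 by (auto simp: e_def f_def g_def h_def)
  have dif: "arr a \<noteq> arr c" if "a \<in> set b1" "c \<in> set b2" for a c using disj that by blast
  have vef: "valid A s t Rel e f" unfolding e_def f_def by (rule band_valid[OF b1])
  have okef: "okp s t e f" and okgh: "okp s t g h" using band_adj(1)[OF b1] band_adj(1)[OF b2]
    by (auto simp: e_def f_def g_def h_def)
  have lsf: "lsrc s t f = x" using okef z1 by (simp add: okp_def e_def)
  have lsh: "lsrc s t h = x" using okgh z2 by (simp add: okp_def g_def)
  have arrA: "arr h \<in> A" "arr g \<in> A"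
    using band_adj(3)[OF b2] by (auto simp: g_def h_def)
  have okeh: "okp s t e h" using z1 lsh dif[OF es(1) es(4)] by (auto simp: okp_def e_def)
  have okeg: "okp s t e (linv g)" using z1 z2 dif[OF es(1) es(3)] by (auto simp: okp_def e_def g_def)
  have d1: "f \<noteq> h" using dif[OF es(2) es(4)] by auto
  have d2: "f \<noteq> linv g" using dif[OF es(2) es(3)] by auto
  have d3: "h \<noteq> linv g" using okgh by (simp add: okp_def)
  have "zero2 Rel e h \<or> zero2 Rel e (linv g)"
    using V3[OF SA vef okeh okeg arrA(1) _ d1 d2 d3] arrA(2) by simp
  then show False
  proof
    assume z: "zero2 Rel e h"
    have "okp s t g f" using z2 lsf dif[OF es(2) es(3)] by (auto simp: okp_def g_def)
    then have "has_DOZE A s t Rel" using T[OF b2 b1 es(4) es(3) es(1) es(2) okeh z] by blast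
    then show False using nd by blast
  next
    assume z: "zero2 Rel e (linv g)"
    have "okp s t (linv h) f" using lsh lsf d1 by (auto simp: okp_def)
    moreover have "linv g \<in> set (winv b2)" "linv h \<in> set (winv b2)" using es by auto
    ultimately have "has_DOZE A s t Rel" using T[OF is_band_winv[OF b2] b1 _ _ es(1) es(2) okeg z] by blast
    then show False using nd by blast
  qed
qed

theorem lemma2p1:
  fixes V :: "'v set" and A :: "'e set" and s t :: "'e \<Rightarrow> 'v" and Rel :: "'e list set"
    and b1 b2 :: "'e letter list"
  assumes "string_algebra V A s t Rel"
    and "\<not> has_DOZE A s t Rel"
    and "is_band A s t Rel b1" and "is_band A s t Rel b2"
    and "\<not> band_equiv b1 b2"
  shows "card (walk_verts s t b1 \<inter> walk_verts s t b2) \<le> 1"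
proof -
  have "walk_verts s t b1 \<inter> walk_verts s t b2 = {}"
    using no_shared_vertex[OF assms] by blast
  then show ?thesis by simp
qed

end
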